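(* For every instance and every seller $k\in S$, $r_k\ge(1-\theta)r^\star$, where $\theta=c_{\max}/B$, $r^\star$ is the stopping rate of $\mathrm{EnvyFree}(f)$ on the cost vector $c$, and $r_k$ is the stopping rate of $\mathrm{EnvyFree}(f)$ on the cost vector obtained from $c$ by replacing $c_k$ with $0$, with $f(x)=\ln(e-x)$ for $0\le x\le e-1$ and $f(x)=0$ otherwise.
   Context: Setting: a buyer with budget $B>0$ faces a finite set $S$ of sellers; seller $i$ owns one divisible item giving utility $u_i>0$ and has cost $c_i\ge0$; $c_{\max}=\max_ic_i$. For $r>0$: $f_r(x)=f(x/r)$, $Q_r(x)=xf_r(x)+\int_x^\infty f_r(y)\,dy$, $P_{i,r}(x)=u_iQ_r(x/u_i)$. The stopping rate of $\mathrm{EnvyFree}(f)$ on a cost vector $c'$ is the value at which, decreasing $r$ from $\infty$, the nondecreasing continuous function $r\mapsto\sum_iP_{i,r}(c'_i)$ first equals $B$. *)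

theory Defs
  imports "HOL-Analysis.Analysis"
begin

definition scaled :: "(real \<Rightarrow> real) \<Rightarrow> real \<Rightarrow> real \<Rightarrow> real" where
  "scaled f r x = f (x / r)"

definition Qfun :: "(real \<Rightarrow> real) \<Rightarrow> real \<Rightarrow> real \<Rightarrow> real" where
  "Qfun f r x = x * scaled f r x + integral {x..} (\<lambda>y. scaled f r y)"

definition Pfun :: "(real \<Rightarrow> real) \<Rightarrow> real \<Rightarrow> real \<Rightarrow> real \<Rightarrow> real" where
  "Pfun f ui r x = ui * Qfun f r (x / ui)"

definition total_pay :: "(real \<Rightarrow> real) \<Rightarrow> 'a set \<Rightarrow> ('a \<Rightarrow> real) \<Rightarrow> ('a \<Rightarrow> real) \<Rightarrow> real \<Rightarrow> real" where
  "total_pay f S u c' r = (\<Sum>i\<in>S. Pfun f (u i) r (c' i))"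

text \<open>Stopping rate of EnvyFree(f): decreasing r from infinity, the first r at which
  the (nondecreasing, continuous) total payment equals B, i.e. the largest such r.\<close>
definition stopping_rate :: "(real \<Rightarrow> real) \<Rightarrow> real \<Rightarrow> 'a set \<Rightarrow> ('a \<Rightarrow> real) \<Rightarrow> ('a \<Rightarrow> real) \<Rightarrow> real" where
  "stopping_rate f B S u c' = Sup {r. r > 0 \<and> total_pay f S u c' r = B}"

definition f_log :: "real \<Rightarrow> real" where
  "f_log x = (if 0 \<le> x \<and> x \<le> exp 1 - 1 then ln (exp 1 - x) else 0)"

end

theory Submission imports Defs begin

definition Q1 :: "real \<Rightarrow> real" where
  "Q1 t = exp 1 * ln (exp 1 - min t (exp 1 - 1)) - exp 1 + min t (exp 1 - 1) + 1"


lemma Qfun_eq: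
  assumes r: "r > 0" and x: "x \<ge> 0"
  shows "Qfun f_log r x = r * Q1 (x / r)"
proof (cases "x / r \<le> exp 1 - 1")
  case True
  define b where "b = r * (exp 1 - 1)"
  have xb: "x \<le> b" using True r by (simp add: b_def field_simps)
  define F where "F y = - r * ((exp 1 - y / r) * ln (exp 1 - y / r) - (exp 1 - y / r))" for y
  have der: "(F has_vector_derivative ln (exp 1 - y / r)) (at y within {x..b})" if y: "y \<in> {x..b}" for y
  proof -
    have "y / r \<le> exp 1 - 1" using y r by (simp add: b_def field_simps)
    then have pos: "exp 1 - y / r > 0" by simp
    have "(F has_real_derivative ln (exp 1 - y / r)) (at y)"
    proof -
      have h: "((\<lambda>z. z * ln z - z) has_real_derivative ln (exp 1 - y / r)) (at (exp 1 - y / r))"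
        using pos by (auto intro!: derivative_eq_intros)
      have g: "((\<lambda>y. exp 1 - y / r) has_real_derivative (- 1 / r)) (at y)"
        using r by (auto intro!: derivative_eq_intros)
      have "((\<lambda>y. - r * ((\<lambda>z. z * ln z - z) (exp 1 - y / r))) has_real_derivative
               - r * (ln (exp 1 - y / r) * (- 1 / r))) (at y)"
        by (rule DERIV_cmult, rule DERIV_chain2[OF h g])
      then show ?thesis using r unfolding F_def by simp
    qed
    then show ?thesis
      using has_real_derivative_iff_has_vector_derivative has_vector_derivative_at_within by blast
  qed
  have I1: "((\<lambda>y. ln (exp 1 - y / r)) has_integral (F b - F x)) {x..b}"
    by (rule fundamental_theorem_of_calculus[OF xb der])
  have I2: "((\<lambda>y. if y \<in> {x..b} then ln (exp 1 - y / r) else 0) has_integral (F b - F x)) {x..}"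
    using I1 by (subst has_integral_restrict) auto
  have I3: "((\<lambda>y. scaled f_log r y) has_integral (F b - F x)) {x..}"
  proof (rule has_integral_eq[OF _ I2])
    fix y assume "y \<in> {x..}"
    then have "y \<ge> x" by simp
    then have "y / r \<ge> 0" using x r by simp
    moreover have "y \<le> b \<longleftrightarrow> y / r \<le> exp 1 - 1" using r by (simp add: b_def field_simps)
    ultimately show "(if y \<in> {x..b} then ln (exp 1 - y / r) else 0) = scaled f_log r y"
      using \<open>y \<ge> x\<close> by (auto simp: scaled_def f_log_def)
  qed
  have eb: "exp 1 - b / r = 1" using r by (simp add: b_def)
  have Fb: "F b = r" unfolding F_def eb by simp
  have "Qfun f_log r x = x * ln (exp 1 - x / r) + (F b - F x)"
    using integral_unique[OF I3] True x r by (simp add: Qfun_def scaled_def f_log_def)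
  also have "\<dots> = r * Q1 (x / r)"
    using True r unfolding Fb unfolding F_def Q1_def
    by (simp add: min_def field_simps)
  finally show ?thesis .
next
  case False
  have I: "((\<lambda>y. scaled f_log r y) has_integral 0) {x..}"
  proof (rule has_integral_is_0)
    fix y assume "y \<in> {x..}"
    then have "x / r \<le> y / r" using r by (simp add: divide_right_mono)
    then show "scaled f_log r y = 0" using False by (simp add: scaled_def f_log_def)
  qed
  show ?thesis using integral_unique[OF I] False r
    by (simp add: Qfun_def scaled_def f_log_def Q1_def min_def)
qed

lemma e_ge2: "exp (1::real) \<ge> 2" using exp_ge_add_one_self[of "1::real"] by simp

lemma Q1_mono:
  assumes "0 \<le> s" "s \<le> t"
  shows "Q1 t \<le> Q1 s"
proof -
  define a where "a = min s (exp 1 - 1)"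
  define b where "b = min t (exp 1 - 1)"
  have ab: "0 \<le> a" "a \<le> b" "b \<le> exp 1 - 1"
    using assms e_ge2 by (auto simp: a_def b_def)
  have pa: "exp 1 - a > 0" "exp 1 - b > 0" using ab by auto
  have "ln (exp 1 - b) - ln (exp 1 - a) \<le> ((exp 1 - b) - (exp 1 - a)) / (exp 1 - a)"
    by (rule ln_diff_le) (use pa in auto)
  moreover have "(a - b) / (exp 1 - a) = - ((b - a) / (exp 1 - a))" by (metis minus_diff_eq minus_divide_left)
  ultimately have 1: "ln (exp 1 - a) - ln (exp 1 - b) \<ge> (b - a) / (exp 1 - a)" by simp
  have 2: "exp 1 * ((b - a) / (exp 1 - a)) \<ge> b - a"
  proof -
    have "exp 1 / (exp 1 - a) \<ge> 1" using pa ab by (simp add: field_simps)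
    then have "(exp 1 / (exp 1 - a)) * (b - a) \<ge> 1 * (b - a)"
      using ab by (intro mult_right_mono) auto
    then show ?thesis by simp
  qed
  have "exp 1 * (ln (exp 1 - a) - ln (exp 1 - b)) \<ge> exp 1 * ((b - a) / (exp 1 - a))"
    using 1 by (intro mult_left_mono) auto
  with 2 show ?thesis unfolding Q1_def a_def[symmetric] b_def[symmetric]
    by (simp add: algebra_simps)
qed

lemma Q1_big: "t \<ge> exp 1 - 1 \<Longrightarrow> Q1 t = 0"
  by (simp add: Q1_def min_def)

lemma Q1_0: "Q1 0 = 1"
  using e_ge2 by (simp add: Q1_def min_def)

lemma Q1_nonneg: "t \<ge> 0 \<Longrightarrow> Q1 t \<ge> 0"
  using Q1_mono[of t "t + (exp 1 - 1)"] Q1_big[of "t + (exp 1 - 1)"] e_ge2 by simp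

lemma Q1_le1: "t \<ge> 0 \<Longrightarrow> Q1 t \<le> 1"
  using Q1_mono[of 0 t] Q1_0 by simp

lemma Q1_lb: assumes "t \<ge> 0" shows "Q1 t \<ge> 1 - t"
proof (cases "t \<le> 1")
  case False then show ?thesis using Q1_nonneg[OF assms] by simp
next
  case True
  have m: "min t (exp 1 - 1) = t" using True e_ge2 by simp
  have pt: "exp 1 - t > 0" using True e_ge2 by simp
  have "ln (exp 1) - ln (exp 1 - t) \<le> (exp 1 - (exp 1 - t)) / (exp 1 - t)"
    by (rule ln_diff_le) (use pt in auto)
  then have 1: "ln (exp 1 - t) \<ge> 1 - t / (exp 1 - t)" by simp
  have 2: "t / (exp 1 - t) \<le> 2 * t / exp 1"
    using pt assms True e_ge2 by (simp add: field_simps) (smt (verit) mult_left_mono)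
  have "exp 1 * ln (exp 1 - t) \<ge> exp 1 * (1 - 2 * t / exp 1)"
    using 1 2 by (intro mult_left_mono) auto
  then have "exp 1 * ln (exp 1 - t) \<ge> exp 1 - 2 * t" by (simp add: algebra_simps)
  then show ?thesis unfolding Q1_def m by simp
qed

lemma Q1_cont: "continuous_on A (\<lambda>x. g x) \<Longrightarrow> continuous_on A (\<lambda>x. Q1 (g x))"
  unfolding Q1_def
  by (intro continuous_intros) (auto simp: min_def)

definition TP :: "'a set \<Rightarrow> ('a \<Rightarrow> real) \<Rightarrow> ('a \<Rightarrow> real) \<Rightarrow> real \<Rightarrow> real" where
  "TP S u d r = (\<Sum>i\<in>S. u i * r * Q1 (d i / (u i * r)))"

lemma total_pay_eq:
  assumes "\<forall>i\<in>S. u i > 0" "\<forall>i\<in>S. d i \<ge> 0" "r > 0"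
  shows "total_pay f_log S u d r = TP S u d r"
  unfolding total_pay_def TP_def
proof (rule sum.cong[OF refl])
  fix i assume i: "i \<in> S"
  have "Pfun f_log (u i) r (d i) = u i * (r * Q1 (d i / u i / r))"
    unfolding Pfun_def using assms i by (subst Qfun_eq) auto
  then show "Pfun f_log (u i) r (d i) = u i * r * Q1 (d i / (u i * r))"
    by (simp add: divide_divide_eq_left)
qed

lemma TP_cont:
  assumes "\<forall>i\<in>S. u i > 0"
  shows "continuous_on {0<..} (TP S u d)"
  unfolding TP_def
  using assms by (intro continuous_intros Q1_cont) auto

lemma TP_ge_k:
  assumes "finite S" "\<forall>i\<in>S. u i > 0" "\<forall>i\<in>S. d i \<ge> 0" "r > 0" "k \<in> S"
  shows "TP S u d r \<ge> u k * r - d k"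
proof -
  have "u k * r * Q1 (d k / (u k * r)) \<le> TP S u d r"
    unfolding TP_def using assms
    by (intro member_le_sum) (auto intro!: mult_nonneg_nonneg Q1_nonneg)
  moreover have "u k * r * Q1 (d k / (u k * r)) \<ge> u k * r * (1 - d k / (u k * r))"
    using assms by (intro mult_left_mono Q1_lb) auto
  moreover have "u k * r * (1 - d k / (u k * r)) = u k * r - d k"
    using assms by (auto simp: field_simps)
  ultimately show ?thesis by linarith
qed

lemma TP_le:
  assumes "\<forall>i\<in>S. u i > 0" "\<forall>i\<in>S. d i \<ge> 0" "r > 0"
  shows "TP S u d r \<le> r * (\<Sum>i\<in>S. u i)"
  unfolding TP_def sum_distrib_left
  using assms by (intro sum_mono) (auto intro!: mult_left_le Q1_le1 simp: mult.commute)

lemma exist_above: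
  assumes "finite S" "\<forall>i\<in>S. u i > 0" "\<forall>i\<in>S. d i \<ge> 0" "k \<in> S" "B > 0"
    and "\<rho> > 0" "TP S u d \<rho> \<le> B"
  shows "\<exists>r. \<rho> \<le> r \<and> r > 0 \<and> TP S u d r = B"
proof -
  define R where "R = \<rho> + (B + d k) / u k"
  have uk: "u k > 0" "d k \<ge> 0" using assms by auto
  have "(B + d k) / u k \<ge> 0" using uk assms by auto
  then have R: "R \<ge> \<rho>" "R > 0" using assms by (auto simp: R_def)
  have "u k * R = u k * \<rho> + (B + d k)" using uk by (simp add: R_def field_simps)
  then have "u k * R - d k \<ge> B" using uk assms by (smt (verit) mult_pos_pos)
  then have TR: "TP S u d R \<ge> B" using TP_ge_k[OF assms(1-3) R(2) assms(4)] by linarith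
  have "continuous_on {\<rho>..R} (TP S u d)"
    using TP_cont[OF assms(2)] by (rule continuous_on_subset) (use assms in auto)
  then obtain r where "\<rho> \<le> r" "r \<le> R" "TP S u d r = B"
    using IVT'[of "TP S u d" \<rho> B R] assms R TR by auto
  then show ?thesis using assms by auto
qed

lemma rate_facts:
  assumes "finite S" "\<forall>i\<in>S. u i > 0" "\<forall>i\<in>S. d i \<ge> 0" "k \<in> S" "B > 0"
  defines "A \<equiv> {r. r > 0 \<and> total_pay f_log S u d r = B}"
  shows "A \<noteq> {}" "bdd_above A" "A = {r. r > 0 \<and> TP S u d r = B}"
proof -
  show AE: "A = {r. r > 0 \<and> TP S u d r = B}"
    unfolding A_def using total_pay_eq[OF assms(2,3)] by auto
  define \<epsilon> where "\<epsilon> = B / ((\<Sum>i\<in>S. u i) + 1)"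
  have su: "(\<Sum>i\<in>S. u i) \<ge> 0" using assms by (intro sum_nonneg) auto
  have ep: "\<epsilon> > 0" using su assms by (simp add: \<epsilon>_def)
  have "\<epsilon> * (\<Sum>i\<in>S. u i) \<le> \<epsilon> * ((\<Sum>i\<in>S. u i) + 1)" using ep by simp
  also have "\<dots> = B" using su by (simp add: \<epsilon>_def)
  finally have "TP S u d \<epsilon> \<le> B" using TP_le[OF assms(2,3) ep] by (simp add: mult.commute)
  then obtain r where "r > 0" "TP S u d r = B" using exist_above[OF assms(1-5) ep] by auto
  then show "A \<noteq> {}" unfolding AE by auto
  show "bdd_above A" unfolding AE bdd_above_def
  proof (intro exI ballI)
    fix r assume "r \<in> {r. r > 0 \<and> TP S u d r = B}"
    then have r: "r > 0" "TP S u d r = B" by auto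
    have "u (k) * r - d k \<le> B" using TP_ge_k[OF assms(1-3) r(1) assms(4)] r by simp
    then show "r \<le> (B + d k) / u k" using assms by (simp add: field_simps mult.commute)
  qed
qed

theorem lemma10:
  fixes S :: "'a set" and u c :: "'a \<Rightarrow> real" and B :: real and k :: 'a
  assumes "finite S"
    and "B > 0"
    and "\<forall>i\<in>S. u i > 0"
    and "\<forall>i\<in>S. c i \<ge> 0"
    and "k \<in> S"
  shows "stopping_rate f_log B S u (c(k := 0))
           \<ge> (1 - Max (c ` S) / B) * stopping_rate f_log B S u c"
proof -
  define c' where "c' = c(k := 0)"
  have c'0: "\<forall>i\<in>S. c' i \<ge> 0" using assms by (auto simp: c'_def)
  define A where "A = {r. r > 0 \<and> total_pay f_log S u c r = B}"
  define A' where "A' = {r. r > 0 \<and> total_pay f_log S u c' r = B}"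
  note RA = rate_facts[OF assms(1,3,4,5,2), folded A_def]
  note RA' = rate_facts[OF assms(1,3) c'0 assms(5,2), folded A'_def]
  define M where "M = Max (c ` S)"
  define \<theta> where "\<theta> = M / B"
  have ckM: "c k \<le> M" unfolding M_def using assms by (intro Max_ge) auto
  have M0: "M \<ge> 0" using ckM assms by auto
  have thB: "\<theta> * B = M" using assms by (simp add: \<theta>_def)
  have sr: "stopping_rate f_log B S u c = Sup A" "stopping_rate f_log B S u (c(k := 0)) = Sup A'"
    by (simp_all add: stopping_rate_def A_def A'_def c'_def)
  obtain r0 where r0: "r0 \<in> A'" using RA'(1) by auto
  have SA'pos: "Sup A' > 0"
  proof -
    have "r0 \<le> Sup A'" by (rule cSup_upper[OF r0 RA'(2)])
    moreover have "r0 > 0" using r0 unfolding A'_def by auto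
    ultimately show ?thesis by linarith
  qed
  have key: "(1 - \<theta>) * r \<le> Sup A'" if rA: "r \<in> A" for r
  proof (cases "\<theta> \<ge> 1")
    case True
    have "r > 0" using rA unfolding A_def by auto
    then have "(1 - \<theta>) * r \<le> 0" using True by (simp add: mult_nonpos_nonneg)
    then show ?thesis using SA'pos by linarith
  next
    case False
    have r: "r > 0" "TP S u c r = B" using rA unfolding RA(3) by auto
    define \<rho> where "\<rho> = (1 - \<theta>) * r"
    have rho: "\<rho> > 0" using False r by (simp add: \<rho>_def)
    have rr: "\<rho> \<le> r" using M0 assms r by (simp add: \<rho>_def \<theta>_def mult_left_le_one_le)
    have t1: "u i * \<rho> * Q1 (c' i / (u i * \<rho>)) \<le> u i * \<rho> * Q1 (c i / (u i * \<rho>)) + (if i = k then c k else 0)"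
      if i: "i \<in> S" for i
    proof (cases "i = k")
      case False then show ?thesis by (simp add: c'_def)
    next
      case True
      have "u k * \<rho> * Q1 (c k / (u k * \<rho>)) \<ge> u k * \<rho> * (1 - c k / (u k * \<rho>))"
        using assms rho by (intro mult_left_mono Q1_lb) auto
      moreover have "u k * \<rho> * (1 - c k / (u k * \<rho>)) = u k * \<rho> - c k"
        using assms rho by (auto simp: field_simps)
      ultimately show ?thesis using True by (simp add: c'_def Q1_0)
    qed
    have t2: "u i * \<rho> * Q1 (c i / (u i * \<rho>)) \<le> (1 - \<theta>) * (u i * r * Q1 (c i / (u i * r)))"
      if i: "i \<in> S" for i
    proof -
      have ui: "u i > 0" "c i \<ge> 0" using i assms by auto
      have "c i / (u i * r) \<le> c i / (u i * \<rho>)"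
        using ui rho rr by (intro divide_left_mono mult_left_mono) auto
      then have "Q1 (c i / (u i * \<rho>)) \<le> Q1 (c i / (u i * r))"
        using ui r by (intro Q1_mono) auto
      then have "u i * \<rho> * Q1 (c i / (u i * \<rho>)) \<le> u i * \<rho> * Q1 (c i / (u i * r))"
        using ui rho by (intro mult_left_mono) auto
      then show ?thesis by (simp add: \<rho>_def algebra_simps)
    qed
    have "TP S u c' \<rho> \<le> (\<Sum>i\<in>S. u i * \<rho> * Q1 (c i / (u i * \<rho>)) + (if i = k then c k else 0))"
      unfolding TP_def by (rule sum_mono) (rule t1)
    also have "\<dots> = (\<Sum>i\<in>S. u i * \<rho> * Q1 (c i / (u i * \<rho>))) + c k"
      using assms by (simp add: sum.distrib)
    also have "\<dots> \<le> (\<Sum>i\<in>S. (1 - \<theta>) * (u i * r * Q1 (c i / (u i * r)))) + c k"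
      using t2 by (intro add_right_mono sum_mono) auto
    also have "\<dots> = (1 - \<theta>) * B + c k"
      using r by (simp add: sum_distrib_left[symmetric] TP_def)
    also have "\<dots> \<le> B" using thB ckM by (simp add: algebra_simps)
    finally have "TP S u c' \<rho> \<le> B" .
    then obtain r' where r': "\<rho> \<le> r'" "r' > 0" "TP S u c' r' = B"
      using exist_above[OF assms(1,3) c'0 assms(5,2) rho] by auto
    then have "r' \<in> A'" unfolding RA'(3) by auto
    then have "r' \<le> Sup A'" by (rule cSup_upper[OF _ RA'(2)])
    then show ?thesis using r' by (simp add: \<rho>_def)
  qed
  show ?thesis
  proof (cases "\<theta> \<ge> 1")
    case True
    obtain r1 where r1: "r1 \<in> A" using RA(1) by auto
    have "r1 \<le> Sup A" by (rule cSup_upper[OF r1 RA(2)])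
    moreover have "r1 > 0" using r1 unfolding A_def by auto
    ultimately have "Sup A \<ge> 0" by linarith
    then have "(1 - \<theta>) * Sup A \<le> 0" using True by (simp add: mult_nonpos_nonneg)
    then show ?thesis using SA'pos sr by (simp add: \<theta>_def M_def)
  next
    case False
    have "Sup A \<le> Sup A' / (1 - \<theta>)"
    proof (rule cSup_least[OF RA(1)])
      fix r assume "r \<in> A"
      then show "r \<le> Sup A' / (1 - \<theta>)" using key[of r] False by (simp add: field_simps)
    qed
    then have "(1 - \<theta>) * Sup A \<le> Sup A'" using False by (simp add: field_simps)
    then show ?thesis using sr by (simp add: \<theta>_def M_def)
  qed
qed

end
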